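(* Let PS1 and PS2 be pure strategies (as in the context) with $m_{PS1}$ finite, and suppose PS2 is inferior to PS1, i.e. $\Delta_{PS1}(X)\ge\Delta_{PS2}(X)$ for every $X\in\mathcal{S}_{\mathrm{non}}$ and $\Delta_{PS1}(X)>\Delta_{PS2}(X)$ for some $X\in\mathcal{S}_{\mathrm{non}}$. Then for any mixed strategy MS derived from PS1 and PS2, $\max\{m_{MS}(X):X\in\mathcal{S}\}\ge\max\{m_{PS1}(X):X\in\mathcal{S}\}$.
   Context: A fitness function $f$ on a finite set is to be maximised. A metaheuristic generates populations $\Phi_0,\Phi_1,\dots$. Let $\mathcal{S}$ be the finite set of all populations, $\mathcal{S}_{\mathrm{opt}}$ those containing at least one optimal solution, $\mathcal{S}_{\mathrm{non}}=\mathcal{S}\setminus\mathcal{S}_{\mathrm{opt}}$. The sequence is a time-homogeneous Markov chain on $\mathcal{S}$ with transition probabilities $P(X,Y)=\Pr(\Phi_{t+1}=Y\mid\Phi_t=X)$, every state of $\mathcal{S}_{\mathrm{opt}}$ absorbing. The expected hitting time $m(X)\in[0,\infty]$ is the expected number of generations until first entering $\mathcal{S}_{\mathrm{opt}}$ from $\Phi_0=X$ ($m(X)=0$ on $\mathcal{S}_{\mathrm{opt}}$). A pure strategy is such a time-independent transition matrix. PS1, PS2 are pure strategies with transition matrices $P_1,P_2$ on the same $\mathcal{S}$ (with $\mathcal{S}_{\mathrm{opt}}$ absorbing), expected hitting times $m_{PS1},m_{PS2}$. A mixed strategy MS derived from PS1 and PS2 assigns to each $X\in\mathcal{S}$ probabilities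 $P_X(PS1)\in[0,1]$, $P_X(PS2)=1-P_X(PS1)$, and has transition matrix $P_{MS}(X,Y)=P_X(PS1)P_1(X,Y)+P_X(PS2)P_2(X,Y)$, with expected hitting time $m_{MS}$. With $d(X)=m_{PS1}(X)$, for $X\in\mathcal{S}_{\mathrm{non}}$: $\Delta_{PS1}(X)=d(X)-\sum_{Y\in\mathcal{S}_{\mathrm{non}}}P_1(X,Y)d(Y)$, $\Delta_{PS2}(X)=d(X)-\sum_{Y\in\mathcal{S}_{\mathrm{non}}}P_2(X,Y)d(Y)$. *)

theory Defs
  imports "HOL-Analysis.Analysis"
begin

text \<open>Populations form the finite type 'a (so the state space S is UNIV).
  Opt is the set S_opt of populations containing an optimal solution.
  A transition matrix is a function P :: 'a => 'a => real.\<close>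

definition transition_matrix :: "'a::finite set \<Rightarrow> ('a \<Rightarrow> 'a \<Rightarrow> real) \<Rightarrow> bool" where
  "transition_matrix Opt P \<longleftrightarrow>
     (\<forall>X Y. 0 \<le> P X Y) \<and> (\<forall>X. (\<Sum>Y\<in>UNIV. P X Y) = 1) \<and> (\<forall>X\<in>Opt. P X X = 1)"

text \<open>surv Opt P t X = Pr(Phi_0,...,Phi_t all lie outside Opt | Phi_0 = X) = Pr(T > t).\<close>
fun surv :: "'a::finite set \<Rightarrow> ('a \<Rightarrow> 'a \<Rightarrow> real) \<Rightarrow> nat \<Rightarrow> 'a \<Rightarrow> real" where
  "surv Opt P 0 X = (if X \<notin> Opt then 1 else 0)"
| "surv Opt P (Suc t) X = (if X \<notin> Opt then (\<Sum>Y\<in>- Opt. P X Y * surv Opt P t Y) else 0)"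

text \<open>Expected hitting time E[T] = sum over t >= 0 of Pr(T > t), a value in [0, infinity].\<close>
definition hitting_time :: "'a::finite set \<Rightarrow> ('a \<Rightarrow> 'a \<Rightarrow> real) \<Rightarrow> 'a \<Rightarrow> ennreal" where
  "hitting_time Opt P X = (\<Sum>t. ennreal (surv Opt P t X))"

text \<open>Mixed strategy transition matrix, with pX X = P_X(PS1).\<close>
definition mixed :: "('a \<Rightarrow> real) \<Rightarrow> ('a \<Rightarrow> 'a \<Rightarrow> real) \<Rightarrow> ('a \<Rightarrow> 'a \<Rightarrow> real) \<Rightarrow> 'a \<Rightarrow> 'a \<Rightarrow> real" where
  "mixed pX P1 P2 X Y = pX X * P1 X Y + (1 - pX X) * P2 X Y"

definition drift :: "'a::finite set \<Rightarrow> ('a \<Rightarrow> 'a \<Rightarrow> real) \<Rightarrow> ('a \<Rightarrow> real) \<Rightarrow> 'a \<Rightarrow> real" where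
  "drift Opt P d X = d X - (\<Sum>Y\<in>- Opt. P X Y * d Y)"

end

theory Submission
  imports Defs
begin

lemma surv_nonneg:
  assumes "\<forall>X Y. 0 \<le> P X Y"
  shows "0 \<le> surv Opt P t X"
  using assms by (induction t arbitrary: X) (auto intro!: sum_nonneg mult_nonneg_nonneg)

lemma hit_real:
  assumes nn: "\<forall>X Y. 0 \<le> P X Y" and fin: "hitting_time Opt P X < \<infinity>"
  shows "summable (\<lambda>t. surv Opt P t X)"
    and "hitting_time Opt P X = ennreal (\<Sum>t. surv Opt P t X)"
proof -
  show s: "summable (\<lambda>t. surv Opt P t X)"
    using fin surv_nonneg[OF nn] summable_suminf_not_top unfolding hitting_time_def
    by (metis infinity_ennreal_def less_irrefl)
  show "hitting_time Opt P X = ennreal (\<Sum>t. surv Opt P t X)"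
    unfolding hitting_time_def using suminf_ennreal2[OF _ s] surv_nonneg[OF nn] by blast
qed

lemma d_eq:
  assumes nn: "\<forall>X Y. 0 \<le> P X Y" and fin: "hitting_time Opt P X < \<infinity>"
  shows "enn2real (hitting_time Opt P X) = (\<Sum>t. surv Opt P t X)"
  using hit_real[OF nn fin] surv_nonneg[OF nn]
  by (simp add: suminf_nonneg)

lemma drift_one:
  assumes nn: "\<forall>X Y. 0 \<le> P X Y" and fin: "\<forall>X. hitting_time Opt P X < \<infinity>"
    and X: "X \<notin> Opt"
  shows "enn2real (hitting_time Opt P X)
     = 1 + (\<Sum>Y\<in>- Opt. P X Y * enn2real (hitting_time Opt P Y))"
proof -
  let ?s = "\<lambda>t Y. surv Opt P t Y"
  have sm: "\<And>Y. summable (\<lambda>t. ?s t Y)" using hit_real(1)[OF nn] fin by blast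
  have "(\<Sum>t. ?s t X) = ?s 0 X + (\<Sum>t. ?s (Suc t) X)"
    using suminf_split_head[OF sm[of X]] by simp
  also have "(\<Sum>t. ?s (Suc t) X) = (\<Sum>t. \<Sum>Y\<in>- Opt. P X Y * ?s t Y)"
    using X by simp
  also have "\<dots> = (\<Sum>Y\<in>- Opt. \<Sum>t. P X Y * ?s t Y)"
    by (rule suminf_sum) (intro summable_mult sm)
  also have "\<dots> = (\<Sum>Y\<in>- Opt. P X Y * (\<Sum>t. ?s t Y))"
    by (intro sum.cong refl suminf_mult sm)
  finally show ?thesis using X d_eq[OF nn] fin by simp
qed

theorem corollary3:
  fixes Opt :: "'a::finite set"
    and P1 P2 :: "'a \<Rightarrow> 'a \<Rightarrow> real"
    and pX :: "'a \<Rightarrow> real"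
  assumes tm1: "transition_matrix Opt P1"
    and tm2: "transition_matrix Opt P2"
    and fin1: "\<forall>X. hitting_time Opt P1 X < \<infinity>"
    and inf_ge: "\<forall>X\<in>- Opt.
        drift Opt P1 (\<lambda>Z. enn2real (hitting_time Opt P1 Z)) X
          \<ge> drift Opt P2 (\<lambda>Z. enn2real (hitting_time Opt P1 Z)) X"
    and inf_gt: "\<exists>X\<in>- Opt.
        drift Opt P1 (\<lambda>Z. enn2real (hitting_time Opt P1 Z)) X
          > drift Opt P2 (\<lambda>Z. enn2real (hitting_time Opt P1 Z)) X"
    and pX: "\<forall>X. 0 \<le> pX X \<and> pX X \<le> 1"
  shows "Max (range (hitting_time Opt (mixed pX P1 P2)))
           \<ge> Max (range (hitting_time Opt P1))"
proof -
  define d where "d Z = enn2real (hitting_time Opt P1 Z)" for Z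
  define Q where "Q = mixed pX P1 P2"
  have nn1: "\<forall>X Y. 0 \<le> P1 X Y" using tm1 unfolding transition_matrix_def by blast
  have nn2: "\<forall>X Y. 0 \<le> P2 X Y" using tm2 unfolding transition_matrix_def by blast
  have nnQ: "\<forall>X Y. 0 \<le> Q X Y" using nn1 nn2 pX unfolding Q_def mixed_def
    by (simp add: add_nonneg_nonneg)
  have d0: "\<And>Z. 0 \<le> d Z" unfolding d_def by simp
  define M where "M = Max (range d)"
  have dM: "\<And>Z. d Z \<le> M" unfolding M_def by simp
  have sub: "d X \<le> 1 + (\<Sum>Y\<in>- Opt. Q X Y * d Y)" if X: "X \<notin> Opt" for X
  proof -
    have e1: "d X = 1 + (\<Sum>Y\<in>- Opt. P1 X Y * d Y)"
      using drift_one[OF nn1 fin1 X] unfolding d_def by simp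
    have e2: "d X - (\<Sum>Y\<in>- Opt. P2 X Y * d Y) \<le> 1"
      using inf_ge X e1 unfolding drift_def d_def[symmetric] by force
    have "(\<Sum>Y\<in>- Opt. Q X Y * d Y) = pX X * (\<Sum>Y\<in>- Opt. P1 X Y * d Y)
        + (1 - pX X) * (\<Sum>Y\<in>- Opt. P2 X Y * d Y)"
      unfolding Q_def mixed_def by (simp add: sum.distrib sum_distrib_left sum_subtractf algebra_simps)
    moreover have "(1 - pX X) * d X \<le> (1 - pX X) * (1 + (\<Sum>Y\<in>- Opt. P2 X Y * d Y))"
      using e2 pX by (intro mult_left_mono) auto
    ultimately show ?thesis using e1 by (simp add: algebra_simps)
  qed
  have ind: "\<forall>X\<in>- Opt. d X \<le> (\<Sum>t<n. surv Opt Q t X) + M * surv Opt Q n X" for n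
  proof (induction n)
    case 0
    then show ?case using dM by simp
  next
    case (Suc n)
    show ?case
    proof
      fix X assume X: "X \<in> - Opt"
      have "d X \<le> 1 + (\<Sum>Y\<in>- Opt. Q X Y * d Y)" using sub X by simp
      also have "\<dots> \<le> 1 + (\<Sum>Y\<in>- Opt. Q X Y * ((\<Sum>t<n. surv Opt Q t Y) + M * surv Opt Q n Y))"
        using Suc nnQ by (intro add_left_mono sum_mono mult_left_mono) auto
      also have "\<dots> = 1 + (\<Sum>t<n. surv Opt Q (Suc t) X) + M * surv Opt Q (Suc n) X"
        using X by (simp add: algebra_simps sum.distrib sum_distrib_left sum.swap[of _ "-Opt"])
      also have "\<dots> = (\<Sum>t<Suc n. surv Opt Q t X) + M * surv Opt Q (Suc n) X"
        using X by (simp only: sum.lessThan_Suc_shift surv.simps(1) ComplD if_True if_False) simp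
      finally show "d X \<le> (\<Sum>t<Suc n. surv Opt Q t X) + M * surv Opt Q (Suc n) X" .
    qed
  qed
  have pw: "hitting_time Opt P1 X \<le> hitting_time Opt Q X" for X
  proof (cases "X \<in> Opt")
    case True
    have "\<And>t. surv Opt P1 t X = 0" using True by (case_tac t) auto
    then show ?thesis unfolding hitting_time_def by simp
  next
    case False
    show ?thesis
    proof (cases "hitting_time Opt Q X < \<infinity>")
      case False then show ?thesis by (simp add: not_less top_unique)
    next
      case True
      have sm: "summable (\<lambda>t. surv Opt Q t X)" using hit_real(1)[OF nnQ True] .
      have lim: "(\<lambda>n. (\<Sum>t<n. surv Opt Q t X) + M * surv Opt Q n X)
          \<longlonglongrightarrow> (\<Sum>t. surv Opt Q t X) + M * 0"
        by (intro tendsto_intros summable_LIMSEQ sm summable_LIMSEQ_zero)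
      have "d X \<le> (\<Sum>t. surv Opt Q t X)"
        using LIMSEQ_le_const[OF lim] ind False by auto
      then have "ennreal (d X) \<le> hitting_time Opt Q X"
        using hit_real(2)[OF nnQ True] by (simp add: ennreal_leI)
      then show ?thesis using fin1 unfolding d_def by simp
    qed
  qed
  obtain X0 where X0: "hitting_time Opt P1 X0 = Max (range (hitting_time Opt P1))"
    using Max_in[of "range (hitting_time Opt P1)"] by (metis UNIV_not_empty empty_is_image finite finite_imageI imageE)
  have "hitting_time Opt Q X0 \<le> Max (range (hitting_time Opt Q))" by simp
  then have "Max (range (hitting_time Opt P1)) \<le> Max (range (hitting_time Opt Q))"
    using pw[of X0] X0 by (metis order_trans)
  then show ?thesis unfolding Q_def .
qed

end
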